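(* Let $(S,\mathscr{S})$ be a measurable space, $n\le N$, and $X=(X_1,\ldots,X_n)$ an exchangeable random element of $S^n$. If $X$ is $N$-extendible, then $\|\mathcal E^N_n\|=1$, where \[ \|\mathcal E^N_n\|:=\sup\Big\{|\mathbb{E}\,g(X_1,\ldots,X_n)|: g:S^n\to\mathbb{R}\text{ bounded measurable},\ |U^N_ng(x)|\le1\ \forall x\in S^N\Big\}. \]
   Context: $X$ is exchangeable if its law is invariant under all permutations of coordinates; $X$ is $N$-extendible if there is an exchangeable random element $(Y_1,\ldots,Y_N)$ of $S^N$ with $(Y_1,\ldots,Y_n)$ equal in distribution to $X$. With $\mathfrak S[n,N]$ the set of injections $\{1,\ldots,n\}\to\{1,\ldots,N\}$ and $(N)_n=N(N-1)\cdots(N-n+1)$, $U^N_ng(x_1,\ldots,x_N)=\frac1{(N)_n}\sum_{\sigma\in\mathfrak S[n,N]}g(x_{\sigma(1)},\ldots,x_{\sigma(n)})$. *)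

theory Defs
  imports "HOL-Probability.Probability"
begin

abbreviation powM :: "'a measure \<Rightarrow> nat \<Rightarrow> (nat \<Rightarrow> 'a) measure" where
  "powM M n \<equiv> PiM {0..<n} (\<lambda>_. M)"

text \<open>Injections {0..<n} -> {0..<N} (extensional, so that the set is finite).\<close>
definition inj_maps :: "nat \<Rightarrow> nat \<Rightarrow> (nat \<Rightarrow> nat) set" where
  "inj_maps n N = {\<sigma> \<in> {0..<n} \<rightarrow>\<^sub>E {0..<N}. inj_on \<sigma> {0..<n}}"

definition falling :: "nat \<Rightarrow> nat \<Rightarrow> nat" where
  "falling N n = (\<Prod>i<n. N - i)"

definition U_op :: "nat \<Rightarrow> nat \<Rightarrow> ((nat \<Rightarrow> 'a) \<Rightarrow> real) \<Rightarrow> (nat \<Rightarrow> 'a) \<Rightarrow> real" where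
  "U_op n N g x = (1 / real (falling N n)) *
     (\<Sum>\<sigma>\<in>inj_maps n N. g (\<lambda>i\<in>{0..<n}. x (\<sigma> i)))"

definition exchangeable :: "'a measure \<Rightarrow> nat \<Rightarrow> 'w measure \<Rightarrow> ('w \<Rightarrow> nat \<Rightarrow> 'a) \<Rightarrow> bool" where
  "exchangeable M n P X \<longleftrightarrow>
     (\<forall>\<sigma>. \<sigma> permutes {0..<n} \<longrightarrow>
        distr P (powM M n) (\<lambda>\<omega>. \<lambda>i\<in>{0..<n}. X \<omega> (\<sigma> i)) = distr P (powM M n) X)"

text \<open>X is N-extendible: there is an exchangeable random element Y of S^N whose first
n coordinates have the law of X. Any such Y may be taken to be the identity on
(S^N, Q) for its law Q, so we quantify over exchangeable laws Q on S^N.\<close>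
definition extendible :: "'a measure \<Rightarrow> nat \<Rightarrow> nat \<Rightarrow> 'w measure \<Rightarrow> ('w \<Rightarrow> nat \<Rightarrow> 'a) \<Rightarrow> bool" where
  "extendible M n N P X \<longleftrightarrow>
     (\<exists>Q. prob_space Q \<and> sets Q = sets (powM M N) \<and>
        exchangeable M N Q (\<lambda>y. y) \<and>
        distr Q (powM M n) (\<lambda>y. \<lambda>i\<in>{0..<n}. y i) = distr P (powM M n) X)"

text \<open>The norm ||E^N_n||, as an extended real (so the supremum is always defined).\<close>
definition E_norm :: "'a measure \<Rightarrow> nat \<Rightarrow> nat \<Rightarrow> 'w measure \<Rightarrow> ('w \<Rightarrow> nat \<Rightarrow> 'a) \<Rightarrow> ereal" where
  "E_norm M n N P X =
     (SUP g \<in> {g. g \<in> borel_measurable (powM M n) \<and>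
                 (\<exists>B. \<forall>x\<in>space (powM M n). \<bar>g x\<bar> \<le> B) \<and>
                 (\<forall>x\<in>space (powM M N). \<bar>U_op n N g x\<bar> \<le> 1)}.
        ereal \<bar>integral\<^sup>L P (\<lambda>\<omega>. g (X \<omega>))\<bar>)"

end

theory Submission
  imports Defs
begin

lemma card_inj_maps: "card (inj_maps n N) = falling N n"
proof -
  have "card (inj_maps n N) = card {f \<in> {0..<n} \<rightarrow>\<^sub>E {0..<N}. inj_on f {0..<n}}"
    unfolding inj_maps_def by simp
  also have "\<dots> = card {0..<N::nat}^(card {0..<n::nat} - card {0..<n::nat}) * prod ((-) (card {0..<N::nat})) {0 ..< card {0..<n::nat}}"
    by (rule card_inj_on_subset_funcset) auto
  also have "\<dots> = falling N n" by (simp add: falling_def atLeast0LessThan)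
  finally show ?thesis .
qed

lemma falling_pos: "n \<le> N \<Longrightarrow> falling N n > 0"
  unfolding falling_def by (auto intro!: prod_pos)

lemma extend_perm:
  assumes "\<sigma> \<in> inj_maps n N" "n \<le> N"
  shows "\<exists>\<pi>. \<pi> permutes {0..<N} \<and> (\<forall>i<n. \<pi> i = \<sigma> i)"
proof -
  let ?A = "{0..<n}" and ?B = "{0..<N}"
  let ?C = "\<sigma> ` ?A"
  have inj: "inj_on \<sigma> ?A" and fs: "\<sigma> \<in> ?A \<rightarrow>\<^sub>E ?B" using assms(1) unfolding inj_maps_def by auto
  have CB: "?C \<subseteq> ?B" using fs by auto
  have cC: "card ?C = n" using card_image[OF inj] by simp
  have "card (?B - ?A) = card (?B - ?C)"
  proof -
    have "card (?B - ?A) = card ?B - card ?A"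
      by (rule card_Diff_subset) (use assms(2) in auto)
    moreover have "card (?B - ?C) = card ?B - card ?C"
      by (rule card_Diff_subset[OF finite_subset[OF CB] CB]) simp
    ultimately show ?thesis using cC by simp
  qed
  then obtain \<tau> where tau: "bij_betw \<tau> (?B - ?A) (?B - ?C)"
    using finite_same_card_bij[of "?B - ?A" "?B - ?C"] by (meson finite_Diff finite_atLeastLessThan)
  have b1: "bij_betw \<sigma> ?A ?C" using inj by (simp add: bij_betw_imageI)
  have "bij_betw (\<lambda>x. if x \<in> ?A then \<sigma> x else \<tau> x) (?A \<union> (?B - ?A)) (?C \<union> (?B - ?C))"
    by (rule bij_betw_disjoint_Un[OF b1 tau]) auto
  moreover have "?A \<union> (?B - ?A) = ?B" using assms(2) by auto
  moreover have "?C \<union> (?B - ?C) = ?B" using CB by auto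
  ultimately have bb: "bij_betw (\<lambda>x. if x \<in> ?A then \<sigma> x else \<tau> x) ?B ?B" by simp
  define \<pi> where "\<pi> = (\<lambda>x. if x \<in> ?B then (if x \<in> ?A then \<sigma> x else \<tau> x) else x)"
  have "bij_betw \<pi> ?B ?B"
    using bb by (rule bij_betw_cong[THEN iffD1, rotated]) (auto simp: \<pi>_def)
  then have "\<pi> permutes ?B" by (rule bij_imp_permutes) (auto simp: \<pi>_def)
  moreover have "\<forall>i<n. \<pi> i = \<sigma> i" using assms(2) by (auto simp: \<pi>_def)
  ultimately show ?thesis by blast
qed

lemma perm_inv:
  fixes M :: "'a measure" and Q :: "(nat \<Rightarrow> 'a) measure" and h :: "(nat \<Rightarrow> 'a) \<Rightarrow> real"
  assumes Qs: "sets Q = sets (powM M N)" and ex: "exchangeable M N Q (\<lambda>y. y)"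
    and sig: "\<sigma> \<in> inj_maps n N" and nN: "n \<le> N" and h: "h \<in> borel_measurable (powM M n)"
  shows "integral\<^sup>L Q (\<lambda>y. h (\<lambda>i\<in>{0..<n}. y (\<sigma> i))) = integral\<^sup>L Q (\<lambda>y. h (\<lambda>i\<in>{0..<n}. y i))"
proof -
  obtain \<pi> where pi: "\<pi> permutes {0..<N}" and pis: "\<forall>i<n. \<pi> i = \<sigma> i"
    using extend_perm[OF sig nN] by blast
  define f where "f = (\<lambda>z. h (\<lambda>i\<in>{0..<n}. z i))"
  have rm: "(\<lambda>z. \<lambda>i\<in>{0..<n}. z i) \<in> measurable (powM M N) (powM M n)"
    using measurable_restrict_subset[of "{0..<n}" "{0..<N}" "\<lambda>_. M"] nN by simp
  have fm: "f \<in> borel_measurable (powM M N)"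
    unfolding f_def using measurable_comp[OF rm h] by (simp add: comp_def)
  have pm: "(\<lambda>y. \<lambda>i\<in>{0..<N}. y (\<pi> i)) \<in> measurable Q (powM M N)"
    unfolding measurable_cong_sets[OF Qs refl]
    by (intro measurable_restrict measurable_component_singleton)
       (use permutes_in_image[OF pi] in auto)
  have idm: "(\<lambda>y. y) \<in> measurable Q (powM M N)"
    by (rule measurable_ident_sets[OF Qs])
  have eq: "distr Q (powM M N) (\<lambda>y. \<lambda>i\<in>{0..<N}. y (\<pi> i)) = distr Q (powM M N) (\<lambda>y. y)"
    using ex pi unfolding exchangeable_def by blast
  have "integral\<^sup>L Q (\<lambda>y. h (\<lambda>i\<in>{0..<n}. y (\<sigma> i))) = integral\<^sup>L Q (\<lambda>y. f (\<lambda>i\<in>{0..<N}. y (\<pi> i)))"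
  proof (rule Bochner_Integration.integral_cong[OF refl])
    fix y :: "nat \<Rightarrow> 'a"
    have e: "(\<lambda>i\<in>{0..<n}. (\<lambda>j\<in>{0..<N}. y (\<pi> j)) i) = (\<lambda>i\<in>{0..<n}. y (\<sigma> i))"
      using pis nN by (auto simp: fun_eq_iff)
    show "h (\<lambda>i\<in>{0..<n}. y (\<sigma> i)) = f (\<lambda>i\<in>{0..<N}. y (\<pi> i))"
      by (simp only: f_def e)
  qed
  also have "\<dots> = integral\<^sup>L (distr Q (powM M N) (\<lambda>y. \<lambda>i\<in>{0..<N}. y (\<pi> i))) f"
    by (rule integral_distr[OF pm fm, symmetric])
  also have "\<dots> = integral\<^sup>L Q (\<lambda>y. f y)"
    unfolding eq by (rule integral_distr[OF idm fm])
  finally show ?thesis unfolding f_def .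
qed

theorem lemma7:
  fixes M :: "'a measure" and P :: "'w measure" and X :: "'w \<Rightarrow> nat \<Rightarrow> 'a"
    and n N :: nat
  assumes "prob_space P"
    and "X \<in> measurable P (powM M n)"
    and "n \<le> N"
    and "exchangeable M n P X"
    and "extendible M n N P X"
  shows "E_norm M n N P X = 1"
proof -
  interpret P: prob_space P by fact
  obtain Q where Qp: "prob_space Q" and Qs: "sets Q = sets (powM M N)"
    and Qex: "exchangeable M N Q (\<lambda>y. y)"
    and Qd: "distr Q (powM M n) (\<lambda>y. \<lambda>i\<in>{0..<n}. y i) = distr P (powM M n) X"
    using assms(5) unfolding extendible_def by blast
  interpret Q: prob_space Q by fact
  have spQ: "space Q = space (powM M N)" using Qs by (rule sets_eq_imp_space_eq)
  define F where "F = falling N n"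
  have Fpos: "F > 0" unfolding F_def using falling_pos[OF assms(3)] .
  have cardI: "card (inj_maps n N) = F" unfolding F_def by (rule card_inj_maps)
  let ?S = "{g. g \<in> borel_measurable (powM M n) \<and>
                 (\<exists>B. \<forall>x\<in>space (powM M n). \<bar>g x\<bar> \<le> B) \<and>
                 (\<forall>x\<in>space (powM M N). \<bar>U_op n N g x\<bar> \<le> 1)}"
  have main: "\<bar>integral\<^sup>L P (\<lambda>\<omega>. g (X \<omega>))\<bar> \<le> 1" if gS: "g \<in> ?S" for g
  proof -
    from gS have gm: "g \<in> borel_measurable (powM M n)"
      and Ub: "\<forall>x\<in>space (powM M N). \<bar>U_op n N g x\<bar> \<le> 1" by auto
    from gS obtain B where gB: "\<forall>x\<in>space (powM M n). \<bar>g x\<bar> \<le> B" by auto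
    have rm: "(\<lambda>y. \<lambda>i\<in>{0..<n}. y i) \<in> measurable Q (powM M n)"
      unfolding measurable_cong_sets[OF Qs refl]
      using measurable_restrict_subset[of "{0..<n}" "{0..<N}" "\<lambda>_. M"] assms(3) by simp
    have sm: "(\<lambda>y. \<lambda>i\<in>{0..<n}. y (\<sigma> i)) \<in> measurable Q (powM M n)" if "\<sigma> \<in> inj_maps n N" for \<sigma>
      unfolding measurable_cong_sets[OF Qs refl]
      by (intro measurable_restrict measurable_component_singleton)
         (use that in \<open>auto simp: inj_maps_def\<close>)
    have gi: "integrable Q (\<lambda>y. g (\<lambda>i\<in>{0..<n}. y (\<sigma> i)))" if "\<sigma> \<in> inj_maps n N" for \<sigma>
    proof (rule Q.integrable_const_bound[where B=B])
      show "AE x in Q. norm (g (\<lambda>i\<in>{0..<n}. x (\<sigma> i))) \<le> B"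
        using gB measurable_space[OF sm[OF that]] by (intro AE_I2) auto
      show "(\<lambda>y. g (\<lambda>i\<in>{0..<n}. y (\<sigma> i))) \<in> borel_measurable Q"
        using measurable_comp[OF sm[OF that] gm] by (simp add: comp_def)
    qed
    have E1: "integral\<^sup>L P (\<lambda>\<omega>. g (X \<omega>)) = integral\<^sup>L Q (\<lambda>y. g (\<lambda>i\<in>{0..<n}. y i))"
    proof -
      have "integral\<^sup>L P (\<lambda>\<omega>. g (X \<omega>)) = integral\<^sup>L (distr P (powM M n) X) g"
        by (rule integral_distr[OF assms(2) gm, symmetric])
      also have "\<dots> = integral\<^sup>L (distr Q (powM M n) (\<lambda>y. \<lambda>i\<in>{0..<n}. y i)) g"
        by (simp add: Qd)
      also have "\<dots> = integral\<^sup>L Q (\<lambda>y. g (\<lambda>i\<in>{0..<n}. y i))"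
        by (rule integral_distr[OF rm gm])
      finally show ?thesis .
    qed
    have Ueq: "U_op n N g = (\<lambda>y. (1 / real F) * (\<Sum>\<sigma>\<in>inj_maps n N. g (\<lambda>i\<in>{0..<n}. y (\<sigma> i))))"
      by (simp add: U_op_def F_def fun_eq_iff)
    have Ui: "integrable Q (U_op n N g)"
      unfolding Ueq
      by (rule Bochner_Integration.integrable_mult_right, rule Bochner_Integration.integrable_sum[where f="\<lambda>\<sigma> y. g (\<lambda>i\<in>{0..<n}. y (\<sigma> i))"], rule gi)
    have "integral\<^sup>L Q (U_op n N g) = (1 / real F) * (\<Sum>\<sigma>\<in>inj_maps n N. integral\<^sup>L Q (\<lambda>y. g (\<lambda>i\<in>{0..<n}. y (\<sigma> i))))"
      unfolding Ueq integral_mult_right_zero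
      by (subst Bochner_Integration.integral_sum[where f="\<lambda>\<sigma> y. g (\<lambda>i\<in>{0..<n}. y (\<sigma> i))"]) (simp_all add: gi)
    also have "\<dots> = (1 / real F) * (\<Sum>\<sigma>\<in>inj_maps n N. integral\<^sup>L Q (\<lambda>y. g (\<lambda>i\<in>{0..<n}. y i)))"
      using perm_inv[OF Qs Qex _ assms(3) gm] by simp
    also have "\<dots> = integral\<^sup>L Q (\<lambda>y. g (\<lambda>i\<in>{0..<n}. y i))"
      using cardI Fpos by simp
    finally have E2: "integral\<^sup>L Q (U_op n N g) = integral\<^sup>L P (\<lambda>\<omega>. g (X \<omega>))" using E1 by simp
    have "integral\<^sup>L Q (U_op n N g) \<le> integral\<^sup>L Q (\<lambda>_. 1::real)"
      by (rule integral_mono[OF Ui]) (use Ub spQ in auto)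
    moreover have "integral\<^sup>L Q (\<lambda>_. -1::real) \<le> integral\<^sup>L Q (U_op n N g)"
      by (rule integral_mono[OF _ Ui]) (use Ub spQ in \<open>auto simp: abs_le_iff\<close>)
    ultimately show ?thesis using E2 by (simp add: Q.prob_space abs_le_iff)
  qed
  have oneS: "(\<lambda>_. 1::real) \<in> ?S"
  proof -
    have "U_op n N (\<lambda>_. 1) x = 1" for x :: "nat \<Rightarrow> 'a"
      using cardI Fpos by (simp add: U_op_def F_def)
    then show ?thesis by auto
  qed
  show ?thesis unfolding E_norm_def
  proof (rule antisym)
    show "(SUP g\<in>?S. ereal \<bar>integral\<^sup>L P (\<lambda>\<omega>. g (X \<omega>))\<bar>) \<le> 1"
      by (rule SUP_least) (use main in auto)
    show "1 \<le> (SUP g\<in>?S. ereal \<bar>integral\<^sup>L P (\<lambda>\<omega>. g (X \<omega>))\<bar>)"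
      by (rule SUP_upper2[OF oneS]) (simp add: P.prob_space)
  qed
qed

end
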